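(* Let $\mathcal{I}$ be a finite set of items and $\mathcal{D}$ a transaction database over $\mathcal{I}$. Let $t_o \in \mathcal{D}$ be a transaction with itemset $T_o \subseteq \mathcal{I}$, and let $\mathcal{D}^- = \mathcal{D} \setminus \{t_o\}$. Define the obsolete closed itemsets $\mathcal{C}_O(\mathcal{D}) = \mathcal{C}(\mathcal{D}) \setminus \mathcal{C}(\mathcal{D}^-)$ and the demoted closed itemsets $\mathcal{C}_D(\mathcal{D}) = \{c \in \mathcal{C}(\mathcal{D}) \cap \mathcal{C}(\mathcal{D}^-) \mid \sigma_{\mathcal{D}^-}(c) = \sigma_{\mathcal{D}}(c) - 1\}$. Then $$\Delta(\mathcal{D}, t_o) := \{T_o \cap c \mid c \in \mathcal{C}(\mathcal{D})\} = \mathcal{C}_O(\mathcal{D}) \cup \mathcal{C}_D(\mathcal{D}).$$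
   Context: A transaction database $\mathcal{D}$ over a finite item set $\mathcal{I}$ is a finite set of transactions, each a pair $(j, Z)$ with $j$ a transaction identifier (tid, all tids distinct) and $Z \subseteq \mathcal{I}$ an itemset. For $X \subseteq \mathcal{I}$, its support set is $\tau_{\mathcal{D}}(X) = \{ j \mid (j,Z) \in \mathcal{D},\ X \subseteq Z\}$ and its support is $\sigma_{\mathcal{D}}(X) = |\tau_{\mathcal{D}}(X)|$. An itemset $X \subseteq \mathcal{I}$ is closed in $\mathcal{D}$ if no proper superset $Y \supsetneq X$ (with $Y \subseteq \mathcal{I}$) has $\sigma_{\mathcal{D}}(Y) = \sigma_{\mathcal{D}}(X)$; $\mathcal{C}(\mathcal{D})$ denotes the family of all closed itemsets of $\mathcal{D}$ (in particular $\mathcal{I}$ itself is always closed). *)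

theory Defs
  imports Main
begin

definition trans_db :: "'i set \<Rightarrow> ('t \<times> 'i set) set \<Rightarrow> bool" where
  "trans_db I D \<longleftrightarrow> finite D \<and> (\<forall>(j,Z)\<in>D. Z \<subseteq> I) \<and>
     (\<forall>(j,Z)\<in>D. \<forall>(j',Z')\<in>D. j = j' \<longrightarrow> Z = Z')"

definition supp_set :: "('t \<times> 'i set) set \<Rightarrow> 'i set \<Rightarrow> 't set" where
  "supp_set D X = {j. \<exists>Z. (j, Z) \<in> D \<and> X \<subseteq> Z}"

definition supp :: "('t \<times> 'i set) set \<Rightarrow> 'i set \<Rightarrow> nat" where
  "supp D X = card (supp_set D X)"

definition is_closed :: "'i set \<Rightarrow> ('t \<times> 'i set) set \<Rightarrow> 'i set \<Rightarrow> bool" where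
  "is_closed I D X \<longleftrightarrow> X \<subseteq> I \<and> \<not> (\<exists>Y. X \<subset> Y \<and> Y \<subseteq> I \<and> supp D Y = supp D X)"

definition closed_sets :: "'i set \<Rightarrow> ('t \<times> 'i set) set \<Rightarrow> 'i set set" where
  "closed_sets I D = {X. is_closed I D X}"

definition obsolete_closed :: "'i set \<Rightarrow> ('t \<times> 'i set) set \<Rightarrow> ('t \<times> 'i set) \<Rightarrow> 'i set set" where
  "obsolete_closed I D t = closed_sets I D - closed_sets I (D - {t})"

definition demoted_closed :: "'i set \<Rightarrow> ('t \<times> 'i set) set \<Rightarrow> ('t \<times> 'i set) \<Rightarrow> 'i set set" where
  "demoted_closed I D t = {c \<in> closed_sets I D \<inter> closed_sets I (D - {t}).
       int (supp (D - {t}) c) = int (supp D c) - 1}"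

end

theory Submission
  imports Defs
begin

lemma ss_mono: "X \<subseteq> Y \<Longrightarrow> supp_set D Y \<subseteq> supp_set D X"
  unfolding supp_set_def by blast

lemma ss_fin: "finite D \<Longrightarrow> finite (supp_set D X)"
proof -
  assume "finite D"
  have "supp_set D X \<subseteq> fst ` D" unfolding supp_set_def by force
  then show ?thesis using \<open>finite D\<close> finite_subset by blast
qed

lemma supp_eq_iff:
  assumes "finite D" "X \<subseteq> Y"
  shows "supp D Y = supp D X \<longleftrightarrow> supp_set D Y = supp_set D X"
proof
  assume "supp D Y = supp D X"
  then show "supp_set D Y = supp_set D X"
    unfolding supp_def using ss_mono[OF assms(2), of D] ss_fin[OF assms(1), of X]
    by (intro card_subset_eq) auto
qed (simp add: supp_def)

lemma closed_iff:
  assumes "finite D"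
  shows "is_closed I D X \<longleftrightarrow> X \<subseteq> I \<and> \<not> (\<exists>Y. X \<subset> Y \<and> Y \<subseteq> I \<and> supp_set D Y = supp_set D X)"
proof -
  have "\<And>Y. X \<subset> Y \<Longrightarrow> (supp D Y = supp D X) = (supp_set D Y = supp_set D X)"
    using supp_eq_iff[OF assms] by (meson psubset_imp_subset)
  then show ?thesis unfolding is_closed_def by (meson)
qed

lemma ss_union:
  assumes "\<forall>j Z Z'. (j,Z)\<in>D \<longrightarrow> (j,Z')\<in>D \<longrightarrow> Z = Z'"
  shows "supp_set D (Y \<union> c) = supp_set D Y \<inter> supp_set D c"
  using assms unfolding supp_set_def by blast

lemma ss_minus:
  assumes "\<forall>j Z Z'. (j,Z)\<in>D \<longrightarrow> (j,Z')\<in>D \<longrightarrow> Z = Z'" "(jo,To) \<in> D"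
  shows "supp_set (D - {(jo,To)}) X = supp_set D X - {jo}"
  using assms unfolding supp_set_def by blast

theorem mainTheorem1:
  fixes I :: "'i set" and D :: "('t \<times> 'i set) set" and j\<^sub>o :: 't and T\<^sub>o :: "'i set"
  assumes "finite I"
    and "trans_db I D"
    and "(j\<^sub>o, T\<^sub>o) \<in> D"
  shows "{T\<^sub>o \<inter> c | c. c \<in> closed_sets I D}
         = obsolete_closed I D (j\<^sub>o, T\<^sub>o) \<union> demoted_closed I D (j\<^sub>o, T\<^sub>o)"
proof -
  let ?Dm = "D - {(j\<^sub>o, T\<^sub>o)}"
  have fD: "finite D" using assms(2) unfolding trans_db_def by blast
  have fDm: "finite ?Dm" using fD by blast
  have sub: "\<forall>(j,Z)\<in>D. Z \<subseteq> I" using assms(2) unfolding trans_db_def by blast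
  have uniq: "\<forall>j Z Z'. (j,Z)\<in>D \<longrightarrow> (j,Z')\<in>D \<longrightarrow> Z = Z'"
    using assms(2) unfolding trans_db_def by fast
  have sm: "\<And>X. supp_set ?Dm X = supp_set D X - {j\<^sub>o}"
    using ss_minus[OF uniq assms(3)] .
  have join: "\<And>X. j\<^sub>o \<in> supp_set D X \<longleftrightarrow> X \<subseteq> T\<^sub>o"
    using uniq assms(3) unfolding supp_set_def by blast
  have fin: "\<And>X. finite (supp_set D X)" using ss_fin[OF fD] .
  have suppm: "\<And>X. X \<subseteq> T\<^sub>o \<Longrightarrow> int (supp ?Dm X) = int (supp D X) - 1"
  proof -
    fix X assume "X \<subseteq> T\<^sub>o"
    then have "j\<^sub>o \<in> supp_set D X" using join by blast
    then have "card (supp_set D X) \<ge> 1" using fin[of X]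
      by (metis One_nat_def Suc_leI card_gt_0_iff empty_iff)
    then show "int (supp ?Dm X) = int (supp D X) - 1"
      unfolding supp_def sm using \<open>j\<^sub>o \<in> supp_set D X\<close> fin[of X] by simp
  qed
  have ToI: "T\<^sub>o \<subseteq> I" using sub assms(3) by blast
  show ?thesis
  proof (rule set_eqI, rule iffI)
    fix x assume "x \<in> {T\<^sub>o \<inter> c | c. c \<in> closed_sets I D}"
    then obtain c where x: "x = T\<^sub>o \<inter> c" and cc: "is_closed I D c"
      unfolding closed_sets_def by blast
    have cI: "c \<subseteq> I" and cn: "\<not> (\<exists>Y. c \<subset> Y \<and> Y \<subseteq> I \<and> supp_set D Y = supp_set D c)"
      using cc closed_iff[OF fD] by blast+
    have xc: "is_closed I D x"
      unfolding closed_iff[OF fD]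
    proof (intro conjI notI)
      show "x \<subseteq> I" using x cI by blast
    next
      assume "\<exists>Y. x \<subset> Y \<and> Y \<subseteq> I \<and> supp_set D Y = supp_set D x"
      then obtain Y where Y: "x \<subset> Y" "Y \<subseteq> I" "supp_set D Y = supp_set D x" by blast
      have "x \<subseteq> T\<^sub>o" using x by blast
      then have "Y \<subseteq> T\<^sub>o" using join Y(3) by blast
      then have "\<not> Y \<subseteq> c" using x Y(1) by blast
      then have "c \<subset> Y \<union> c" by blast
      moreover have "Y \<union> c \<subseteq> I" using Y cI by blast
      moreover have "supp_set D (Y \<union> c) = supp_set D c"
        using ss_union[OF uniq, of Y c] Y(3) ss_mono[of x c D] x by blast
      ultimately show False using cn by blast
    qed
    show "x \<in> obsolete_closed I D (j\<^sub>o, T\<^sub>o) \<union> demoted_closed I D (j\<^sub>o, T\<^sub>o)"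
    proof (cases "is_closed I ?Dm x")
      case True
      have "int (supp ?Dm x) = int (supp D x) - 1" using suppm[of x] x by blast
      then show ?thesis unfolding demoted_closed_def closed_sets_def using True xc by blast
    next
      case False
      then show ?thesis unfolding obsolete_closed_def closed_sets_def using xc by blast
    qed
  next
    fix x assume "x \<in> obsolete_closed I D (j\<^sub>o, T\<^sub>o) \<union> demoted_closed I D (j\<^sub>o, T\<^sub>o)"
    then have xc: "is_closed I D x" and alt: "\<not> is_closed I ?Dm x \<or> int (supp ?Dm x) = int (supp D x) - 1"
      unfolding obsolete_closed_def demoted_closed_def closed_sets_def by blast+
    have "x \<subseteq> T\<^sub>o"
    proof (rule ccontr)
      assume nx: "\<not> x \<subseteq> T\<^sub>o"
      have eq: "\<And>Y. x \<subseteq> Y \<Longrightarrow> supp_set ?Dm Y = supp_set D Y"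
        using sm join nx by blast
      have xI: "x \<subseteq> I" and xn: "\<not> (\<exists>Y. x \<subset> Y \<and> Y \<subseteq> I \<and> supp_set D Y = supp_set D x)"
        using xc closed_iff[OF fD] by blast+
      have "\<not> (\<exists>Y. x \<subset> Y \<and> Y \<subseteq> I \<and> supp_set ?Dm Y = supp_set ?Dm x)"
      proof
        assume "\<exists>Y. x \<subset> Y \<and> Y \<subseteq> I \<and> supp_set ?Dm Y = supp_set ?Dm x"
        then obtain Y where "x \<subset> Y" "Y \<subseteq> I" "supp_set ?Dm Y = supp_set ?Dm x" by blast
        moreover have "supp_set ?Dm Y = supp_set D Y" using eq \<open>x \<subset> Y\<close> by blast
        moreover have "supp_set ?Dm x = supp_set D x" using eq by blast
        ultimately show False using xn by auto
      qed
      then have "is_closed I ?Dm x" using xI closed_iff[OF fDm] by blast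
      moreover have "int (supp ?Dm x) \<noteq> int (supp D x) - 1"
        using eq[of x] unfolding supp_def by simp
      ultimately show False using alt by blast
    qed
    then have "x = T\<^sub>o \<inter> x" by blast
    then show "x \<in> {T\<^sub>o \<inter> c | c. c \<in> closed_sets I D}"
      using xc unfolding closed_sets_def by blast
  qed
qed

end
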